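(* Let $a$ and $b$ be relatively prime integers with $1<a<b$, let $(u,v)$ be the definitely least solution of $ax+by=1$, let $S=\langle a,b\rangle$ and $h=\min I(S)$. Then there are exactly $|v|$ minimal isolated gaps modulo $a$ of $I(S)$, namely $h,\ h+b,\ \dots,\ h+(|v|-1)b$.
   Context: $\langle a,b\rangle=\{\lambda_1a+\lambda_2b:\lambda_1,\lambda_2\in\mathbb{N}\}$. $I(S)$ is the set of isolated gaps of $S$ ($x\in\mathbb{N}\setminus S$ with $x-1,x+1\in S$), and for $i\in\{1,\dots,a-1\}$, $I_{i,a}(S)=\{s\in I(S):s\equiv i\pmod a\}$. For each $i$ with $I_{i,a}(S)\neq\varnothing$, $h_i=\min I_{i,a}(S)$ is called a minimal isolated gap modulo $a$ of $I(S)$. The definitely least solution $(u,v)$ of $ax+by=1$ is the unique integer solution with $|u|,|v|$ minimal; equivalently the one with $|u|\le b/2$, $|v|\le a/2$. *)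

theory Defs
  imports Main
begin

definition gen2 :: "nat \<Rightarrow> nat \<Rightarrow> nat set" where
  "gen2 a b = {l1 * a + l2 * b | l1 l2. True}"

definition isolated_gaps :: "nat set \<Rightarrow> nat set" where
  "isolated_gaps S = {x. x \<ge> 1 \<and> x \<notin> S \<and> x - 1 \<in> S \<and> x + 1 \<in> S}"

definition isolated_gaps_mod :: "nat set \<Rightarrow> nat \<Rightarrow> nat \<Rightarrow> nat set" where
  "isolated_gaps_mod S i a = {s \<in> isolated_gaps S. s mod a = i}"

definition min_isolated_gaps_mod :: "nat set \<Rightarrow> nat \<Rightarrow> nat set" where
  "min_isolated_gaps_mod S a =
     {LEAST s. s \<in> isolated_gaps_mod S i a | i. i \<in> {1..a-1} \<and> isolated_gaps_mod S i a \<noteq> {}}"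

definition definitely_least_solution :: "int \<Rightarrow> int \<Rightarrow> int \<Rightarrow> int \<Rightarrow> bool" where
  "definitely_least_solution a b u v \<longleftrightarrow>
     a * u + b * v = 1 \<and> 2 * \<bar>u\<bar> \<le> \<bar>b\<bar> \<and> 2 * \<bar>v\<bar> \<le> \<bar>a\<bar>"

end

theory Submission
  imports Defs
begin

definition memS :: "int \<Rightarrow> int \<Rightarrow> int \<Rightarrow> bool" where
  "memS a b m \<longleftrightarrow> (\<exists>l1 l2. l1 \<ge> 0 \<and> l2 \<ge> 0 \<and> m = l1*a + l2*b)"

lemma memS_nonneg: "memS a b m \<Longrightarrow> 0 \<le> a \<Longrightarrow> 0 \<le> b \<Longrightarrow> 0 \<le> m"
  unfolding memS_def by auto

lemma gen2_memS: "x \<in> gen2 a b \<longleftrightarrow> memS (int a) (int b) (int x)"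
proof
  assume "x \<in> gen2 a b"
  then obtain l1 l2 where "x = l1*a + l2*b" unfolding gen2_def by auto
  then show "memS (int a) (int b) (int x)" unfolding memS_def
    by (rule_tac x="int l1" in exI, rule_tac x="int l2" in exI) auto
next
  assume "memS (int a) (int b) (int x)"
  then obtain l1 l2 where l: "l1 \<ge> 0" "l2 \<ge> 0" "int x = l1*int a + l2*int b"
    unfolding memS_def by auto
  have "int x = int (nat l1 * a + nat l2 * b)" using l by simp
  then have "x = nat l1 * a + nat l2 * b" by (simp only: of_nat_eq_iff)
  then show "x \<in> gen2 a b" unfolding gen2_def by auto
qed

lemma rep_mem:
  fixes a b y k :: int
  assumes cop: "coprime a b" and a0: "0 < a" and b0: "0 < b" and y0: "0 \<le> y" and ya: "y < a"
  shows "memS a b (y*b + k*a) \<longleftrightarrow> 0 \<le> k"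
proof
  assume "0 \<le> k"
  then show "memS a b (y*b + k*a)" unfolding memS_def
    by (rule_tac x=k in exI, rule_tac x=y in exI) (use y0 in auto)
next
  assume "memS a b (y*b + k*a)"
  then obtain l1 l2 where l: "l1 \<ge> 0" "l2 \<ge> 0" "y*b + k*a = l1*a + l2*b"
    unfolding memS_def by auto
  have e1: "(l2 - y)*b = (k - l1)*a" using l(3) by (simp add: algebra_simps)
  then have "a dvd (l2 - y)*b" by (metis dvd_triv_right)
  then have "a dvd (l2 - y)" using cop by (simp add: coprime_dvd_mult_left_iff)
  then obtain m where m: "l2 - y = a*m" by (auto elim: dvdE)
  have m0: "m \<ge> 0"
  proof (rule ccontr)
    assume "\<not> m \<ge> 0"
    then have "m \<le> -1" by simp
    then have "a*m \<le> a*(-1)" using a0 by (intro mult_left_mono) auto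
    then show False using m l(2) ya by simp
  qed
  have "(k - l1)*a = (m*b)*a" using e1 m by (simp add: algebra_simps)
  then have "k - l1 = m*b" using a0 by simp
  moreover have "m*b \<ge> 0" using m0 b0 by simp
  ultimately show "0 \<le> k" using l(1) by simp
qed

lemma rep_exists:
  fixes a b u v n :: int
  assumes "u*a + v*b = 1" and "0 < a"
  shows "\<exists>y k. 0 \<le> y \<and> y < a \<and> n = y*b + k*a"
proof -
  have "n*(u*a+v*b) = n" using assms by simp
  then have "n = n*u*a + (n*v)*b" by (simp add: algebra_simps)
  also have "\<dots> = n*u*a + ((n*v div a)*a + n*v mod a)*b" by (simp only: div_mult_mod_eq)
  also have "\<dots> = (n*v mod a)*b + ((n*v div a)*b + n*u)*a"
  proof -
    have "\<And>q r::int. n*u*a + (q*a + r)*b = r*b + (q*b + n*u)*a" by (simp add: algebra_simps)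
    then show ?thesis by blast
  qed
  finally show ?thesis using assms(2)
    by (rule_tac x="n*v mod a" in exI, rule_tac x="(n*v div a)*b + n*u" in exI) auto
qed

lemma charz:
  fixes a b w t e x u v :: int
  assumes cop: "coprime a b" and a1: "1 < a" and ab: "a < b" and w0: "0 \<le> w" and t0: "0 \<le> t"
    and we: "w*b - t*a = e" and tb: "2*t \<le> b" and wa: "2*w \<le> a" and uv: "u*a + v*b = 1"
  shows "(\<not> memS a b x \<and> memS a b (x+e) \<and> memS a b (x-e)) \<longleftrightarrow>
         (\<exists>y k. a-w \<le> y \<and> y < a \<and> 1 \<le> k \<and> k \<le> t \<and> x = y*b - k*a)"
proof
  assume H: "\<not> memS a b x \<and> memS a b (x+e) \<and> memS a b (x-e)"
  obtain y k0 where y: "0 \<le> y" "y < a" "x = y*b + k0*a" using rep_exists[OF uv, of x] a1 by auto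
  have k0: "k0 < 0" using H rep_mem[OF cop _ _ y(1) y(2), of k0] a1 ab y(3) by auto
  have "a \<le> y + w"
  proof (rule ccontr)
    assume "\<not> a \<le> y + w"
    moreover have "x + e = (y+w)*b + (k0 - t)*a" using we y(3) by (simp add: algebra_simps)
    ultimately show False using H rep_mem[OF cop _ _ _ _, of "y+w" "k0-t"] a1 ab y w0 t0 k0 by auto
  qed
  have "x + e = (y+w-a)*b + (b + k0 - t)*a" using we y(3) by (simp add: algebra_simps)
  then have c1: "0 \<le> b + k0 - t" using H rep_mem[OF cop _ _ _ _, of "y+w-a" "b + k0 - t"] a1 ab y w0 wa \<open>a \<le> y + w\<close> by auto
  have "w \<le> y"
  proof (rule ccontr)
    assume "\<not> w \<le> y"
    moreover have "x - e = (y-w+a)*b + (k0 + t - b)*a" using we y(3) by (simp add: algebra_simps)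
    ultimately show False using H rep_mem[OF cop _ _ _ _, of "y-w+a" "k0+t-b"] a1 ab y w0 t0 k0 tb wa by auto
  qed
  have "x - e = (y-w)*b + (k0 + t)*a" using we y(3) by (simp add: algebra_simps)
  then have c2: "0 \<le> k0 + t" using H rep_mem[OF cop _ _ _ _, of "y-w" "k0 + t"] a1 ab y w0 \<open>w \<le> y\<close> by auto
  show "\<exists>y k. a-w \<le> y \<and> y < a \<and> 1 \<le> k \<and> k \<le> t \<and> x = y*b - k*a"
    using \<open>a \<le> y + w\<close> y k0 c2
    by (rule_tac x=y in exI, rule_tac x="-k0" in exI) auto
next
  assume "\<exists>y k. a-w \<le> y \<and> y < a \<and> 1 \<le> k \<and> k \<le> t \<and> x = y*b - k*a"
  then obtain y k where yk: "a-w \<le> y" "y < a" "1 \<le> k" "k \<le> t" "x = y*b - k*a" by auto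
  have "x = y*b + (-k)*a" using yk by simp
  then have n1: "\<not> memS a b x" using rep_mem[OF cop _ _ _ _, of y "-k"] yk a1 ab wa by auto
  have "x + e = (y+w-a)*b + (b-k-t)*a" using we yk(5) by (simp add: algebra_simps)
  then have n2: "memS a b (x+e)" using rep_mem[OF cop _ _ _ _, of "y+w-a" "b-k-t"] yk a1 ab wa w0 tb by auto
  have "x - e = (y-w)*b + (t-k)*a" using we yk(5) by (simp add: algebra_simps)
  then have n3: "memS a b (x-e)" using rep_mem[OF cop _ _ _ _, of "y-w" "t-k"] yk a1 ab wa w0 tb by auto
  show "\<not> memS a b x \<and> memS a b (x+e) \<and> memS a b (x-e)" using n1 n2 n3 by auto
qed

lemma iso_char:
  fixes a b x :: nat and e :: int
  assumes e: "e = 1 \<or> e = -1"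
  shows "x \<in> isolated_gaps (gen2 a b) \<longleftrightarrow>
    (\<not> memS (int a) (int b) (int x) \<and> memS (int a) (int b) (int x + e) \<and> memS (int a) (int b) (int x - e))"
proof
  assume "x \<in> isolated_gaps (gen2 a b)"
  then have h: "x \<ge> 1" "\<not> memS (int a) (int b) (int x)" "memS (int a) (int b) (int (x - 1))"
    "memS (int a) (int b) (int (x + 1))"
    unfolding isolated_gaps_def gen2_memS by auto
  have "int (x - 1) = int x - 1" using h(1) by simp
  then show "\<not> memS (int a) (int b) (int x) \<and> memS (int a) (int b) (int x + e) \<and> memS (int a) (int b) (int x - e)"
    using h e by (auto simp: add.commute)
next
  assume h: "\<not> memS (int a) (int b) (int x) \<and> memS (int a) (int b) (int x + e) \<and> memS (int a) (int b) (int x - e)"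
  then have m: "memS (int a) (int b) (int x + 1)" "memS (int a) (int b) (int x - 1)" using e by auto
  then have "int x - 1 \<ge> 0" using memS_nonneg[of "int a" "int b" "int x - 1"] by simp
  then have x1: "x \<ge> 1" by simp
  then have "int (x - 1) = int x - 1" by simp
  then show "x \<in> isolated_gaps (gen2 a b)"
    unfolding isolated_gaps_def gen2_memS using h m x1 by (auto simp: add.commute)
qed

theorem proposition4p2:
  fixes a b :: nat and u v :: int
  assumes "coprime a b" and "1 < a" and "a < b"
    and "definitely_least_solution (int a) (int b) u v"
  shows "min_isolated_gaps_mod (gen2 a b) a =
           {(LEAST x. x \<in> isolated_gaps (gen2 a b)) + k * b | k. k < nat \<bar>v\<bar>}
         \<and> card (min_isolated_gaps_mod (gen2 a b) a) = nat \<bar>v\<bar>"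
proof -
  define A where "A = int a"
  define B where "B = int b"
  define W where "W = \<bar>v\<bar>"
  define T where "T = \<bar>u\<bar>"
  have cop: "coprime A B" using assms(1) unfolding A_def B_def by simp
  have a1: "1 < A" and ab: "A < B" using assms(2,3) unfolding A_def B_def by auto
  have uv: "A*u + B*v = 1" and tb: "2*T \<le> B" and wa: "2*W \<le> A"
    using assms(4) unfolding definitely_least_solution_def A_def B_def T_def W_def by auto
  have uv': "u*A + v*B = 1" using uv by (simp add: mult.commute)
  have v0: "v \<noteq> 0"
  proof
    assume "v = 0"
    then have "A*u = 1" using uv by simp
    then show False using a1 by (simp add: zmult_eq_1_iff)
  qed
  have u0: "u \<noteq> 0"
  proof
    assume "u = 0"
    then have "B*v = 1" using uv by simp
    then show False using a1 ab by (simp add: zmult_eq_1_iff)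
  qed
  obtain e where e: "e = 1 \<or> e = -1" and we: "W*B - T*A = e"
  proof (cases "v > 0")
    case True
    have "u < 0"
    proof (rule ccontr)
      assume "\<not> u < 0"
      then have "A*u \<ge> 0" using a1 by simp
      moreover have "B*v \<ge> B*1" using True ab a1 by (intro mult_left_mono) auto
      ultimately show False using uv a1 ab by simp
    qed
    then have "W*B - T*A = 1" using True uv unfolding W_def T_def by (simp add: algebra_simps)
    then show ?thesis using that by blast
  next
    case False
    then have vn: "v < 0" using v0 by simp
    have "u > 0"
    proof (rule ccontr)
      assume "\<not> u > 0"
      then have "A*u \<le> 0" using a1 by (simp add: mult_nonneg_nonpos)
      moreover have "B*v \<le> B*(-1)" using vn ab a1 by (intro mult_left_mono) auto
      ultimately show False using uv a1 ab by simp
    qed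
    then have "W*B - T*A = -1" using vn uv unfolding W_def T_def by (simp add: algebra_simps)
    then show ?thesis using that by blast
  qed
  have W1: "W \<ge> 1" and T1: "T \<ge> 1" using u0 v0 unfolding W_def T_def by auto
  have w0: "0 \<le> W" and t0: "0 \<le> T" using W1 T1 by auto
  let ?G = "isolated_gaps (gen2 a b)"
  have G: "x \<in> ?G \<longleftrightarrow> (\<exists>y k. A-W \<le> y \<and> y < A \<and> 1 \<le> k \<and> k \<le> T \<and> int x = y*B - k*A)" for x
    using iso_char[OF e, of x a b] charz[OF cop a1 ab w0 t0 we tb wa uv', of "int x"]
    unfolding A_def B_def by simp
  have pos: "y*B - T*A \<ge> 0" if "A - W \<le> y" "y < A" for y
  proof -
    have "\<not> memS A B (y*B - T*A) \<and> memS A B (y*B - T*A + e) \<and> memS A B (y*B - T*A - e)"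
      using charz[OF cop a1 ab w0 t0 we tb wa uv', of "y*B - T*A"] that T1 by blast
    then have "memS A B (y*B - T*A + 1)" "memS A B (y*B - T*A - 1)" using e by auto
    then show ?thesis using memS_nonneg a1 ab by fastforce
  qed
  have inG: "nat (y*B - T*A) \<in> ?G" if "A - W \<le> y" "y < A" for y
    unfolding G using pos[OF that] that T1 by auto
  have le: "y0*B - T*A \<le> int x" if "x \<in> ?G" "y0 \<le> y" "int x = y*B - k*A" "k \<le> T" for x y0 y k
  proof -
    have "y0*B \<le> y*B" using that ab a1 by (intro mult_right_mono) auto
    moreover have "k*A \<le> T*A" using that a1 by (intro mult_right_mono) auto
    ultimately show ?thesis using that by simp
  qed
  define h where "h = nat ((A - W)*B - T*A)"
  have L: "(LEAST x. x \<in> ?G) = h"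
  proof (rule Least_equality)
    show "h \<in> ?G" unfolding h_def using inG[of "A - W"] W1 by simp
  next
    fix x assume "x \<in> ?G"
    then obtain y k where yk: "A-W \<le> y" "y < A" "1 \<le> k" "k \<le> T" "int x = y*B - k*A" unfolding G by auto
    show "h \<le> x" using le[OF \<open>x \<in> ?G\<close> yk(1) yk(5) yk(4)] unfolding h_def by simp
  qed
  have M: "nat (y*B - T*A) mod a \<in> {1..a-1} \<and>
     (LEAST s. s \<in> isolated_gaps_mod (gen2 a b) (nat (y*B - T*A) mod a) a) = nat (y*B - T*A)"
    if y: "A - W \<le> y" "y < A" for y
  proof -
    define s where "s = nat (y*B - T*A)"
    have si: "int s = y*B - T*A" unfolding s_def using pos[OF y] by simp
    have "s mod a \<noteq> 0"
    proof
      assume "s mod a = 0"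
      then have "A dvd int s" unfolding A_def by (simp add: mod_eq_0_iff_dvd flip: of_nat_dvd_iff)
      then have "A dvd y*B - T*A" using si by simp
      then have "A dvd y*B" by (metis dvd_diff_commute dvd_triv_right dvd_add_right_iff diff_add_cancel)
      then have "A dvd y" using cop by (simp add: coprime_dvd_mult_left_iff)
      moreover have "0 < y" using y wa by simp
      ultimately have "A \<le> y" by (simp add: zdvd_imp_le)
      then show False using y by simp
    qed
    moreover have "s mod a < a" using assms(2) by simp
    ultimately have r: "s mod a \<in> {1..a-1}" by simp
    have "(LEAST s'. s' \<in> isolated_gaps_mod (gen2 a b) (s mod a) a) = s"
    proof (rule Least_equality)
      show "s \<in> isolated_gaps_mod (gen2 a b) (s mod a) a"
        unfolding isolated_gaps_mod_def s_def using inG[OF y] by simp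
    next
      fix s' assume "s' \<in> isolated_gaps_mod (gen2 a b) (s mod a) a"
      then have s'G: "s' \<in> ?G" and md: "s' mod a = s mod a" unfolding isolated_gaps_mod_def by auto
      obtain y' k' where yk: "A-W \<le> y'" "y' < A" "1 \<le> k'" "k' \<le> T" "int s' = y'*B - k'*A"
        using s'G unfolding G by auto
      have "int s' mod A = int s mod A" using md unfolding A_def by (metis of_nat_mod)
      then have "A dvd int s' - int s" by (simp add: mod_eq_dvd_iff)
      then have "A dvd (y' - y)*B - (k' - T)*A" using si yk(5) by (simp add: algebra_simps)
      then have "A dvd (y' - y)*B" by (metis dvd_diff_commute dvd_triv_right dvd_add_right_iff diff_add_cancel)
      then have d: "A dvd (y' - y)" using cop by (simp add: coprime_dvd_mult_left_iff)
      have "y' = y"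
      proof (rule ccontr)
        assume "y' \<noteq> y"
        then have "\<bar>A\<bar> \<le> \<bar>y' - y\<bar>" using d by (simp add: dvd_imp_le_int)
        then show False using y yk wa by simp
      qed
      then show "s \<le> s'" using le[OF s'G _ yk(5) yk(4), of y] si by simp
    qed
    then show ?thesis using r unfolding s_def by simp
  qed
  have C: "min_isolated_gaps_mod (gen2 a b) a = {h + k * b | k. k < nat W}"
  proof
    show "min_isolated_gaps_mod (gen2 a b) a \<subseteq> {h + k * b | k. k < nat W}"
    proof
      fix z assume "z \<in> min_isolated_gaps_mod (gen2 a b) a"
      then obtain i where z: "z = (LEAST s. s \<in> isolated_gaps_mod (gen2 a b) i a)"
        and ne: "isolated_gaps_mod (gen2 a b) i a \<noteq> {}"
        unfolding min_isolated_gaps_mod_def by auto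
      then obtain s0 where "s0 \<in> isolated_gaps_mod (gen2 a b) i a" by auto
      then have s0G: "s0 \<in> ?G" and i: "i = s0 mod a" unfolding isolated_gaps_mod_def by auto
      obtain y k where yk: "A-W \<le> y" "y < A" "1 \<le> k" "k \<le> T" "int s0 = y*B - k*A"
        using s0G unfolding G by auto
      define s where "s = nat (y*B - T*A)"
      have si: "int s = y*B - T*A" unfolding s_def using pos[OF yk(1,2)] by simp
      have "int s0 - int s = (T - k)*A" using si yk(5) by (simp add: algebra_simps)
      then have "int s0 mod A = int s mod A" by (simp add: mod_eq_dvd_iff)
      then have "s0 mod a = s mod a" unfolding A_def by (metis of_nat_mod of_nat_eq_iff)
      then have zs: "z = s" using M[OF yk(1,2)] z i unfolding s_def by simp
      define j where "j = nat (y - (A - W))"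
      have "int s = int h + int j * B" unfolding j_def h_def si using yk pos[of "A - W"] W1
        by (simp add: algebra_simps)
      then have "s = h + j * b" unfolding B_def by (metis of_nat_add of_nat_mult of_nat_eq_iff)
      moreover have "j < nat W" unfolding j_def using yk by simp
      ultimately show "z \<in> {h + k * b | k. k < nat W}" using zs by auto
    qed
  next
    show "{h + k * b | k. k < nat W} \<subseteq> min_isolated_gaps_mod (gen2 a b) a"
    proof
      fix z assume "z \<in> {h + k * b | k. k < nat W}"
      then obtain j where j: "j < nat W" "z = h + j*b" by auto
      define y where "y = A - W + int j"
      have y: "A - W \<le> y" "y < A" unfolding y_def using j by auto
      have "int (nat (y*B - T*A)) = y*B - T*A" using pos[OF y] by simp
      also have "\<dots> = int h + int j * B" unfolding h_def y_def using pos[of "A - W"] W1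
        by (simp add: algebra_simps)
      finally have "nat (y*B - T*A) = z" unfolding j B_def by (metis of_nat_add of_nat_mult of_nat_eq_iff)
      moreover have "nat (y*B - T*A) \<in> isolated_gaps_mod (gen2 a b) (nat (y*B - T*A) mod a) a"
        unfolding isolated_gaps_mod_def using inG[OF y] by simp
      ultimately show "z \<in> min_isolated_gaps_mod (gen2 a b) a"
        using M[OF y] unfolding min_isolated_gaps_mod_def
        by (intro CollectI exI[of _ "nat (y*B - T*A) mod a"]) auto
    qed
  qed
  have "{h + k * b | k. k < nat W} = (\<lambda>k. h + k*b) ` {..<nat W}" by auto
  moreover have "inj_on (\<lambda>k. h + k*b) {..<nat W}" using assms(3) by (auto simp: inj_on_def)
  ultimately have "card {h + k * b | k. k < nat W} = nat W" by (simp add: card_image)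
  then show ?thesis using C L unfolding W_def by simp
qed

end
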